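(* Let $D$ be a distribution over $\mathcal{X}\times\mathcal{Y}$ ($\mathcal{X}\subset\mathbb{R}^d$, $\mathcal{Y}=\{1,\dots,c\}$) that is $(k_1,\dots,k_n)$-separable with $\delta$-margin, and let $K=\prod_{s=1}^n k_s$. Then there exists a 4-layer network $g:\mathcal{X}\to\mathbb{R}^c$ of the form $$p^s(x)=\sum_{l=1}^{k_s} v_{s,l}\,\rho(u_s^Tx-\beta_{s,l})\ (s=1,\dots,n),\qquad g(x)=W^T\big(\rho(u^Tp(x)-\gamma_1),\dots,\rho(u^Tp(x)-\gamma_K)\big)^T,$$ where $p(x)=(p^1(x),\dots,p^n(x))^T$, $u_s\in\mathbb{R}^d$, $\beta_{s,l},v_{s,l}\in\mathbb{R}$, $u\in\mathbb{R}^n$, $\gamma_i\in\mathbb{R}$, $W\in\mathbb{R}^{K\times c}$ (so $n(d+1)+2\sum_{s=1}^n k_s+(c+1)\prod_{s=1}^n k_s$ parameters), which classifies perfectly: with probability $1$ over $(x,y)\sim D$, $y$ is the unique maximizer of $j\mapsto g_j(x)$ over $j\in\{1,\dots,c\}$.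
   Context: $\rho(t)=1/(1+e^{-t})$ is the sigmoid function. Definition ($(k_1,\dots,k_n)$-separable with $\delta$-margin): Let $\mathcal{X}\subset\mathbb{R}^d$, $\mathcal{Y}=\{1,\dots,c\}$. A distribution $D$ over $\mathcal{X}\times\mathcal{Y}$ is $(k_1,\dots,k_n)$-separable with $\delta$-margin ($\delta>0$) if there exist $a_1,\dots,a_n\in\mathbb{R}^d$ with $\|a_s\|_2=1$ and constants $b_{s,1}<b_{s,2}<\cdots<b_{s,k_s+1}$ for each $s\in\{1,\dots,n\}$ such that, for each multi-index $\mathbf{i}=(i_1,\dots,i_n)$ with $i_s\in\{1,\dots,k_s\}$ and $\mathcal{X}_{\mathbf{i}}=\{x\in\mathcal{X}: b_{s,i_s}+\delta<a_s^Tx<b_{s,i_s+1}-\delta \text{ for all } 1\le s\le n\}$: (i) there is $y_{\mathbf{i}}\in\mathcal{Y}$ with $\mathbb{P}_{(x,y)\sim D}(y=y_{\mathbf{i}}\mid x\in\mathcal{X}_{\mathbf{i}})=1$; (ii) $\mathbb{P}_{(x,y)\sim D}\big(x\in\bigcup_{\mathbf{i}}\mathcal{X}_{\mathbf{i}}\big)=1$. *)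

theory Defs
  imports "HOL-Probability.Probability"
begin

definition sigmoid :: "real \<Rightarrow> real" where
  "sigmoid t = 1 / (1 + exp (- t))"

definition multi_indices :: "nat \<Rightarrow> (nat \<Rightarrow> nat) \<Rightarrow> (nat \<Rightarrow> nat) set" where
  "multi_indices n k = PiE {1..n} (\<lambda>s. {1..k s})"

definition sep_cell ::
  "(real^'d) set \<Rightarrow> nat \<Rightarrow> (nat \<Rightarrow> real^'d) \<Rightarrow> (nat \<Rightarrow> nat \<Rightarrow> real) \<Rightarrow> real
   \<Rightarrow> (nat \<Rightarrow> nat) \<Rightarrow> (real^'d) set" where
  "sep_cell X n a b \<delta> i =
     {x \<in> X. \<forall>s\<in>{1..n}. b s (i s) + \<delta> < a s \<bullet> x \<and> a s \<bullet> x < b s (i s + 1) - \<delta>}"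

text \<open>Probability-one statements are expressed with AE;
  "P(y = y_i | x \<in> X_i) = 1" is read as "almost surely, x \<in> X_i implies y = y_i".\<close>
definition separable ::
  "((real^'d) \<times> nat) measure \<Rightarrow> (real^'d) set \<Rightarrow> nat \<Rightarrow> nat \<Rightarrow> (nat \<Rightarrow> nat) \<Rightarrow> real \<Rightarrow> bool" where
  "separable D X c n k \<delta> \<longleftrightarrow> \<delta> > 0 \<and>
     (\<exists>(a :: nat \<Rightarrow> real^'d) (b :: nat \<Rightarrow> nat \<Rightarrow> real).
        (\<forall>s\<in>{1..n}. norm (a s) = 1 \<and> strict_mono_on {1..k s + 1} (b s)) \<and>
        (\<forall>i\<in>multi_indices n k. \<exists>y\<in>{1..c}.
            AE z in D. fst z \<in> sep_cell X n a b \<delta> i \<longrightarrow> snd z = y) \<and>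
        (AE z in D. fst z \<in> (\<Union>i\<in>multi_indices n k. sep_cell X n a b \<delta> i)))"

definition net_p ::
  "(nat \<Rightarrow> nat) \<Rightarrow> (nat \<Rightarrow> real^'d) \<Rightarrow> (nat \<Rightarrow> nat \<Rightarrow> real) \<Rightarrow> (nat \<Rightarrow> nat \<Rightarrow> real)
   \<Rightarrow> nat \<Rightarrow> real^'d \<Rightarrow> real" where
  "net_p k us \<beta> v s x = (\<Sum>l=1..k s. v s l * sigmoid (us s \<bullet> x - \<beta> s l))"

definition net_g ::
  "nat \<Rightarrow> (nat \<Rightarrow> nat) \<Rightarrow> (nat \<Rightarrow> real^'d) \<Rightarrow> (nat \<Rightarrow> nat \<Rightarrow> real) \<Rightarrow> (nat \<Rightarrow> nat \<Rightarrow> real)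
   \<Rightarrow> (nat \<Rightarrow> real) \<Rightarrow> (nat \<Rightarrow> real) \<Rightarrow> (nat \<Rightarrow> nat \<Rightarrow> real) \<Rightarrow> nat \<Rightarrow> real^'d \<Rightarrow> real" where
  "net_g n k us \<beta> v u \<gamma> W j x =
     (\<Sum>i=1..(\<Prod>s=1..n. k s).
        W i j * sigmoid ((\<Sum>s=1..n. u s * net_p k us \<beta> v s x) - \<gamma> i))"

end

theory Submission
  imports Defs
begin


lemma one_exp: "0 < 1 + exp (x::real)"
  by (smt (verit) exp_gt_zero)

lemma sig_pos: "0 < sigmoid t"
  unfolding sigmoid_def by (simp add: add_pos_pos)

lemma sig_lt1: "sigmoid t < 1"
proof -
  have "0 < exp (-t)" by simp
  then show ?thesis unfolding sigmoid_def using one_exp[of "-t"] by (simp add: divide_less_eq)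
qed

lemma sig_neg: "sigmoid (-t) = 1 - sigmoid t"
  proof -
  have "1 / (1 + exp t) + exp t / (1 + exp t) = 1" using one_exp[of t] by (simp add: add_divide_distrib[symmetric])
  then show ?thesis unfolding sigmoid_def by (simp add: exp_minus field_simps)
qed

lemma sig_mono: "a \<le> b \<Longrightarrow> sigmoid a \<le> sigmoid b"
  unfolding sigmoid_def by (simp add: frac_le add_pos_pos)

lemma sig_small: "(\<epsilon>::real) > 0 \<Longrightarrow> \<exists>T>0. sigmoid (-T) < \<epsilon>"
proof -
  assume e: "\<epsilon> > 0"
  define T where "T = max 1 (ln (1/\<epsilon>))"
  have T: "T > 0" unfolding T_def by simp
  have "ln (1/\<epsilon>) \<le> T" unfolding T_def by simp
  hence "exp (ln (1/\<epsilon>)) \<le> exp T" by simp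
  hence a: "1/\<epsilon> \<le> exp T" using e by simp
  have b: "1 / exp T \<le> \<epsilon>" using a e by (metis exp_gt_zero le_imp_inverse_le inverse_eq_divide inverse_inverse_eq zero_less_divide_1_iff)
  have c: "sigmoid (-T) < 1 / exp T" unfolding sigmoid_def using one_exp[of T] by (intro divide_strict_left_mono) (auto simp: mult_pos_pos)
  show ?thesis using T b c by force
qed


lemma sum_err:
  fixes f g :: "'a \<Rightarrow> real"
  assumes "\<forall>l\<in>A. \<bar>f l - g l\<bar> \<le> e"
  shows "\<bar>sum f A - sum g A\<bar> \<le> real (card A) * e"
proof -
  have "\<bar>sum f A - sum g A\<bar> = \<bar>\<Sum>l\<in>A. f l - g l\<bar>" by (simp add: sum_subtractf)
  also have "\<dots> \<le> (\<Sum>l\<in>A. \<bar>f l - g l\<bar>)" by (rule sum_abs)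
  also have "\<dots> \<le> (\<Sum>l\<in>A. e)" using assms by (intro sum_mono) auto
  also have "\<dots> = real (card A) * e" by simp
  finally show ?thesis .
qed

lemma sum_step: "(m::nat) \<le> k \<Longrightarrow> (\<Sum>l=1..k. if l \<le> m then f l else 0) = (\<Sum>l=1..m. f l :: real)"
proof -
  assume "m \<le> k"
  have "sum f ({1..k} \<inter> {..m}) = (\<Sum>l=1..k. if l \<in> {..m} then f l else 0)"
    by (rule sum.inter_restrict) simp
  hence "(\<Sum>l=1..k. if l \<le> m then f l else 0) = sum f ({1..k} \<inter> {..m})" by simp
  also have "{1..k} \<inter> {..m} = {1..m}" using \<open>m \<le> k\<close> by auto
  finally show ?thesis .
qed

lemma tele: "(\<Sum>r=1..(m::nat). G r - G (r - 1)) = G m - (G 0 :: real)"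
  by (induction m) (auto simp: sum.cl_ivl_Suc)

lemma radix_bound:
  fixes n :: nat and d k :: "nat \<Rightarrow> nat"
  shows "(\<forall>s\<in>{1..n}. d s < k s) \<Longrightarrow> (\<Sum>s=1..n. d s * prod k {1..<s}) < prod k {1..<Suc n}"
proof (induction n)
  case 0 then show ?case by simp
next
  case (Suc n)
  have A: "(\<Sum>s=1..n. d s * prod k {1..<s}) < prod k {1..<Suc n}" using Suc by auto
  have d: "d (Suc n) + 1 \<le> k (Suc n)" using Suc.prems[rule_format, of "Suc n"] by simp
  have "(\<Sum>s=1..Suc n. d s * prod k {1..<s}) = (\<Sum>s=1..n. d s * prod k {1..<s}) + d (Suc n) * prod k {1..<Suc n}"
    by (simp add: sum.cl_ivl_Suc)
  also have "\<dots> < (d (Suc n) + 1) * prod k {1..<Suc n}" using A by simp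
  also have "\<dots> \<le> k (Suc n) * prod k {1..<Suc n}" using d by (rule mult_le_mono1)
  also have "\<dots> = prod k {1..<Suc (Suc n)}" by (simp add: prod.op_ivl_Suc)
  finally show ?case .
qed

lemma divmod_uniq: "(a::nat) < P \<Longrightarrow> a' < P \<Longrightarrow> a + d*P = a' + d'*P \<Longrightarrow> a = a' \<and> d = d'"
proof -
  assume h: "a < P" "a' < P" "a + d*P = a' + d'*P"
  have "(a + d*P) mod P = a" using h(1) by simp
  moreover have "(a' + d'*P) mod P = a'" using h(2) by simp
  moreover have "(a + d*P) div P = d" using h(1) by simp
  moreover have "(a' + d'*P) div P = d'" using h(2) by simp
  ultimately show ?thesis using h(3) by metis
qed

lemma radix_inj:
  fixes n :: nat and d d' k :: "nat \<Rightarrow> nat"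
  shows "(\<forall>s\<in>{1..n}. d s < k s) \<Longrightarrow> (\<forall>s\<in>{1..n}. d' s < k s) \<Longrightarrow>
   (\<Sum>s=1..n. d s * prod k {1..<s}) = (\<Sum>s=1..n. d' s * prod k {1..<s}) \<Longrightarrow> \<forall>s\<in>{1..n}. d s = d' s"
proof (induction n)
  case 0 then show ?case by simp
next
  case (Suc n)
  have A: "(\<Sum>s=1..n. d s * prod k {1..<s}) < prod k {1..<Suc n}" using Suc.prems radix_bound[of n d k] by auto
  have A': "(\<Sum>s=1..n. d' s * prod k {1..<s}) < prod k {1..<Suc n}" using Suc.prems radix_bound[of n d' k] by auto
  have "(\<Sum>s=1..n. d s * prod k {1..<s}) + d (Suc n) * prod k {1..<Suc n} =
        (\<Sum>s=1..n. d' s * prod k {1..<s}) + d' (Suc n) * prod k {1..<Suc n}"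
    using Suc.prems(3) by (simp add: sum.cl_ivl_Suc)
  from divmod_uniq[OF A A' this] have e: "(\<Sum>s=1..n. d s * prod k {1..<s}) = (\<Sum>s=1..n. d' s * prod k {1..<s})"
    and e2: "d (Suc n) = d' (Suc n)" by auto
  have "\<forall>s\<in>{1..n}. d s = d' s" using Suc.IH Suc.prems e by auto
  then show ?case using e2 by (metis atLeastAtMostSuc_conv atLeastAtMost_iff insert_iff le_add1 plus_1_eq_Suc)
qed



lemma construct:
  fixes a :: "nat \<Rightarrow> real^'d" and b :: "nat \<Rightarrow> nat \<Rightarrow> real" and yf :: "(nat \<Rightarrow> nat) \<Rightarrow> nat"
    and X :: "(real^'d) set" and n :: nat and k :: "nat \<Rightarrow> nat" and \<delta> :: real
  assumes dpos: "\<delta> > 0" and bm: "\<forall>s\<in>{1..n}. strict_mono_on {1..k s + 1} (b s)"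
  shows "\<exists>(us :: nat \<Rightarrow> real^'d) (\<beta> :: nat \<Rightarrow> nat \<Rightarrow> real) (v :: nat \<Rightarrow> nat \<Rightarrow> real)
           (u :: nat \<Rightarrow> real) (\<gamma> :: nat \<Rightarrow> real) (W :: nat \<Rightarrow> nat \<Rightarrow> real).
     \<forall>i\<in>multi_indices n k. \<forall>x\<in>sep_cell X n a b \<delta> i. \<forall>j. j \<noteq> yf i \<longrightarrow>
        net_g n k us \<beta> v u \<gamma> W j x < net_g n k us \<beta> v u \<gamma> W (yf i) x"
proof -
  define MI where "MI = multi_indices n k"
  define P where "P s = real (prod k {1..<s})" for s
  define K where "K = prod k {1..n}"
  define S where "S = (\<Sum>s=1..n. P s * real (k s))"
  have P0: "P s \<ge> 0" for s unfolding P_def by (rule of_nat_0_le_iff)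
  have S0: "S \<ge> 0" unfolding S_def using P0 by (intro sum_nonneg) auto
  obtain T1 where T1: "T1 > 0" "sigmoid (-T1) < 1 / (4 * (S + 1))"
    using sig_small[of "1 / (4 * (S + 1))"] S0 by auto
  obtain T2 where T2: "T2 > 0" "sigmoid (-T2) < 1 / (2 * (real K + 1))"
    using sig_small[of "1 / (2 * (real K + 1))"] by auto
  define e1 where "e1 = sigmoid (-T1)"
  define e3 where "e3 = sigmoid (-T2)"
  define t where "t = T1 / \<delta>"
  define T where "T = 4 * T2"
  define c0 where "c0 = (\<Sum>s=1..n. P s)"
  define code where "code i = (\<Sum>s=1..n. (i s - 1) * prod k {1..<s})" for i :: "nat \<Rightarrow> nat"
  define F where "F j m = (if m \<in> code ` MI \<and> yf (inv_into MI code m) = j then 1 else (0::real))" for j m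
  define G where "G j r = (if r = 0 then 0 else F j (r - 1))" for j r
  define us :: "nat \<Rightarrow> real^'d" where "us s = t *\<^sub>R a s" for s
  define \<beta> where "\<beta> s l = t * b s l" for s l
  define v :: "nat \<Rightarrow> nat \<Rightarrow> real" where "v s l = 1" for s l
  define u where "u s = T * P s" for s
  define \<gamma> where "\<gamma> r = T * (real r - 3/2 + c0)" for r
  define W where "W r j = G j r - G j (r - 1)" for r j
  have tpos: "t > 0" unfolding t_def using T1 dpos by simp
  have tdel: "t * \<delta> = T1" unfolding t_def using dpos by simp
  have e1T: "sigmoid T1 = 1 - e1" unfolding e1_def using sig_neg[of T1] by simp
  have e3T: "sigmoid T2 = 1 - e3" unfolding e3_def using sig_neg[of T2] by simp
  have inMI: "\<forall>s\<in>{1..n}. i s \<in> {1..k s}" if "i \<in> MI" for i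
    using that unfolding MI_def multi_indices_def by (auto simp: PiE_iff)
  have inj: "inj_on code MI"
  proof (rule inj_onI)
    fix i i' assume i: "i \<in> MI" and i': "i' \<in> MI" and eq: "code i = code i'"
    have ri: "\<forall>s\<in>{1..n}. i s \<in> {1..k s}" using inMI i by blast
    have ri': "\<forall>s\<in>{1..n}. i' s \<in> {1..k s}" using inMI i' by blast
    have "\<forall>s\<in>{1..n}. i s - 1 = i' s - 1"
      by (rule radix_inj[of n "\<lambda>s. i s - 1" k "\<lambda>s. i' s - 1"]) (use ri ri' eq in \<open>auto simp: code_def\<close>)
    hence "\<forall>s\<in>{1..n}. i s = i' s" using ri ri' by force
    then show "i = i'" using i i' unfolding MI_def multi_indices_def by (auto intro: PiE_ext)
  qed
  have main: "\<forall>i\<in>multi_indices n k. \<forall>x\<in>sep_cell X n a b \<delta> i. \<forall>j. j \<noteq> yf i \<longrightarrow>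
        net_g n k us \<beta> v u \<gamma> W j x < net_g n k us \<beta> v u \<gamma> W (yf i) x"
  proof (intro ballI allI impI)
    fix i x j
    assume iMI: "i \<in> multi_indices n k" and xc: "x \<in> sep_cell X n a b \<delta> i" and jne: "j \<noteq> yf i"
    have iMI': "i \<in> MI" using iMI MI_def by simp
    have ri: "\<forall>s\<in>{1..n}. i s \<in> {1..k s}" using inMI iMI' by blast
    have xz: "\<forall>s\<in>{1..n}. b s (i s) + \<delta> < a s \<bullet> x \<and> a s \<bullet> x < b s (i s + 1) - \<delta>"
      using xc unfolding sep_cell_def by auto
    define p where "p s = net_p k us \<beta> v s x" for s
    have pe: "\<bar>p s - real (i s)\<bar> \<le> real (k s) * e1" if s: "s \<in> {1..n}" for s
    proof -
      have ib: "1 \<le> i s" "i s \<le> k s" using ri s by auto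
      have sm: "strict_mono_on {1..k s + 1} (b s)" using bm s by blast
      have p_eq: "p s = (\<Sum>l=1..k s. sigmoid (t * (a s \<bullet> x - b s l)))"
        unfolding p_def net_p_def us_def \<beta>_def v_def by (simp add: inner_scaleR_left right_diff_distrib)
      have st: "(\<Sum>l=1..k s. if l \<le> i s then 1 else 0) = real (i s)"
        using sum_step[of "i s" "k s" "\<lambda>_. 1"] ib by simp
      have "\<bar>(\<Sum>l=1..k s. sigmoid (t * (a s \<bullet> x - b s l))) - (\<Sum>l=1..k s. if l \<le> i s then 1 else 0)\<bar>
            \<le> real (card {1..k s}) * e1"
      proof (rule sum_err, rule ballI)
        fix l assume l: "l \<in> {1..k s}"
        show "\<bar>sigmoid (t * (a s \<bullet> x - b s l)) - (if l \<le> i s then 1 else 0)\<bar> \<le> e1"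
        proof (cases "l \<le> i s")
          case True
          have "b s l \<le> b s (i s)" using strict_mono_on_leD[OF sm, of l "i s"] l ib True by auto
          hence "\<delta> \<le> a s \<bullet> x - b s l" using xz s by force
          hence "t * \<delta> \<le> t * (a s \<bullet> x - b s l)" using tpos by (intro mult_left_mono) auto
          hence "sigmoid T1 \<le> sigmoid (t * (a s \<bullet> x - b s l))" using tdel sig_mono by metis
          moreover have "sigmoid (t * (a s \<bullet> x - b s l)) < 1" by (rule sig_lt1)
          ultimately show ?thesis using True e1T by auto
        next
          case False
          have "b s (i s + 1) \<le> b s l" using strict_mono_on_leD[OF sm, of "i s + 1" l] l ib False by auto
          hence "a s \<bullet> x - b s l \<le> - \<delta>" using xz s by force
          hence "t * (a s \<bullet> x - b s l) \<le> t * (-\<delta>)" using tpos by (intro mult_left_mono) auto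
          hence "sigmoid (t * (a s \<bullet> x - b s l)) \<le> sigmoid (-T1)" using tdel sig_mono by (metis mult_minus_right)
          moreover have "0 < sigmoid (t * (a s \<bullet> x - b s l))" by (rule sig_pos)
          ultimately show ?thesis using False e1_def by auto
        qed
      qed
      then show ?thesis using p_eq st by simp
    qed
    define q where "q = (\<Sum>s=1..n. P s * p s)"
    have sum_u: "(\<Sum>s=1..n. u s * net_p k us \<beta> v s x) = T * q"
      unfolding q_def u_def p_def by (simp add: sum_distrib_left mult.assoc)
    have codeeq: "real (code i) + c0 = (\<Sum>s=1..n. P s * real (i s))"
    proof -
      have "real (code i) = (\<Sum>s=1..n. P s * (real (i s) - 1))"
        unfolding code_def P_def of_nat_sum using ri by (auto simp: of_nat_diff intro!: sum.cong)
      moreover have "(\<Sum>s=1..n. P s * real (i s)) = (\<Sum>s=1..n. P s * (real (i s) - 1) + P s)"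
        by (simp add: algebra_simps)
      ultimately show ?thesis unfolding c0_def by (simp add: sum.distrib)
    qed
    have qe: "\<bar>q - (real (code i) + c0)\<bar> < 1/4"
    proof -
      have "\<bar>q - (real (code i) + c0)\<bar> = \<bar>\<Sum>s=1..n. P s * (p s - real (i s))\<bar>"
        unfolding q_def codeeq by (simp add: sum_subtractf right_diff_distrib)
      also have "\<dots> \<le> (\<Sum>s=1..n. \<bar>P s * (p s - real (i s))\<bar>)" by (rule sum_abs)
      also have "\<dots> \<le> (\<Sum>s=1..n. P s * (real (k s) * e1))"
        by (rule sum_mono) (use pe P0 in \<open>auto simp: abs_mult intro!: mult_left_mono\<close>)
      also have "\<dots> = S * e1" unfolding S_def by (simp add: sum_distrib_right mult.assoc)
      also have "\<dots> < 1/4"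
      proof -
        have "S * e1 \<le> S * (1 / (4 * (S + 1)))" using S0 T1 e1_def by (intro mult_left_mono) auto
        also have "\<dots> < 1/4" using S0 by (simp add: field_simps)
        finally show ?thesis .
      qed
      finally show ?thesis .
    qed
    define m where "m = code i"
    have dk: "\<forall>s\<in>{1..n}. i s - 1 < k s" using ri by fastforce
    have mK: "m < K"
      using radix_bound[OF dk]
      unfolding m_def code_def K_def by (simp add: atLeastLessThanSuc_atLeastAtMost)
    have qlo: "real m + c0 - 1/4 < q" and qhi: "q < real m + c0 + 1/4"
      using qe unfolding m_def abs_less_iff by linarith+
    define h where "h r = sigmoid ((\<Sum>s=1..n. u s * net_p k us \<beta> v s x) - \<gamma> r)" for r
    have he: "\<bar>h r - (if r \<le> m + 1 then 1 else 0)\<bar> \<le> e3" for r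
    proof -
      have harg: "(\<Sum>s=1..n. u s * net_p k us \<beta> v s x) - \<gamma> r = T * (q - (real r - 3/2 + c0))"
        using sum_u unfolding \<gamma>_def by (simp add: right_diff_distrib)
      show ?thesis
      proof (cases "r \<le> m + 1")
        case True
        have "real r \<le> real m + 1" using True by linarith
        hence "1/4 \<le> q - (real r - 3/2 + c0)" using qlo by linarith
        hence "T * (1/4) \<le> T * (q - (real r - 3/2 + c0))" using T2 T_def by (intro mult_left_mono) auto
        hence "sigmoid T2 \<le> h r" unfolding h_def harg using T_def sig_mono by simp
        moreover have "h r < 1" unfolding h_def by (rule sig_lt1)
        ultimately show ?thesis using True e3T by auto
      next
        case False
        have "real r \<ge> real m + 2" using False by linarith
        hence "q - (real r - 3/2 + c0) \<le> -1/4" using qhi by linarith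
        hence "T * (q - (real r - 3/2 + c0)) \<le> T * (-1/4)" using T2 T_def by (intro mult_left_mono) auto
        hence "h r \<le> sigmoid (-T2)" unfolding h_def harg using T_def sig_mono by simp
        moreover have "0 < h r" unfolding h_def by (rule sig_pos)
        ultimately show ?thesis using False e3_def by auto
      qed
    qed
    have Wb: "\<bar>W r j'\<bar> \<le> 1" for r j' unfolding W_def G_def F_def by auto
    have Fm: "F j' m = (if yf i = j' then 1 else 0)" for j'
      using inj iMI' unfolding m_def F_def by (simp add: inv_into_f_f)
    have gF: "\<bar>net_g n k us \<beta> v u \<gamma> W j' x - F j' m\<bar> < 1/2" for j'
    proof -
      have g_eq: "net_g n k us \<beta> v u \<gamma> W j' x = (\<Sum>r=1..K. W r j' * h r)"
        unfolding net_g_def h_def K_def by simp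
      have s_eq: "(\<Sum>r=1..K. W r j' * (if r \<le> m + 1 then 1 else 0)) = F j' m"
      proof -
        have "(\<Sum>r=1..K. W r j' * (if r \<le> m + 1 then 1 else 0)) = (\<Sum>r=1..K. if r \<le> m+1 then W r j' else 0)"
          by (intro sum.cong) auto
        also have "\<dots> = (\<Sum>r=1..m+1. W r j')" using sum_step[of "m+1" K "\<lambda>r. W r j'"] mK by simp
        also have "\<dots> = G j' (m+1) - G j' 0" unfolding W_def by (rule tele)
        also have "\<dots> = F j' m" unfolding G_def by simp
        finally show ?thesis .
      qed
      have "\<bar>(\<Sum>r=1..K. W r j' * h r) - (\<Sum>r=1..K. W r j' * (if r \<le> m + 1 then 1 else 0))\<bar>
             \<le> real (card {1..K}) * e3"
      proof (rule sum_err, rule ballI)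
        fix r assume "r \<in> {1..K}"
        have "\<bar>W r j' * h r - W r j' * (if r \<le> m + 1 then 1 else 0)\<bar>
              = \<bar>W r j'\<bar> * \<bar>h r - (if r \<le> m + 1 then 1 else 0)\<bar>"
          by (simp add: abs_mult right_diff_distrib[symmetric])
        also have "\<dots> \<le> 1 * e3" by (rule mult_mono) (use Wb he in auto)
        finally show "\<bar>W r j' * h r - W r j' * (if r \<le> m + 1 then 1 else 0)\<bar> \<le> e3" by simp
      qed
      moreover have "real (card {1..K}) * e3 < 1/2"
      proof -
        have "real K * e3 \<le> real K * (1 / (2 * (real K + 1)))" using T2 e3_def by (intro mult_left_mono) auto
        also have "\<dots> < 1/2" by (simp add: field_simps)
        finally show ?thesis by simp
      qed
      ultimately show ?thesis using g_eq s_eq by simp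
    qed
    show "net_g n k us \<beta> v u \<gamma> W j x < net_g n k us \<beta> v u \<gamma> W (yf i) x"
    proof -
      have f0: "F j m = 0" "F (yf i) m = 1" using Fm[of j] Fm[of "yf i"] jne by auto
      have "net_g n k us \<beta> v u \<gamma> W j x < F j m + 1/2"
        using gF[of j] unfolding abs_less_iff by linarith
      moreover have "F (yf i) m - 1/2 < net_g n k us \<beta> v u \<gamma> W (yf i) x"
        using gF[of "yf i"] unfolding abs_less_iff by linarith
      ultimately show ?thesis using f0 by linarith
    qed
  qed
  then show ?thesis by blast
qed


theorem corollary2:
  fixes D :: "((real^'d) \<times> nat) measure" and X :: "(real^'d) set"
    and c n :: nat and k :: "nat \<Rightarrow> nat" and \<delta> :: real
  assumes "prob_space D"
    and "AE z in D. fst z \<in> X \<and> snd z \<in> {1..c}"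
    and "separable D X c n k \<delta>"
  shows "\<exists>(us :: nat \<Rightarrow> real^'d) (\<beta> :: nat \<Rightarrow> nat \<Rightarrow> real) (v :: nat \<Rightarrow> nat \<Rightarrow> real)
           (u :: nat \<Rightarrow> real) (\<gamma> :: nat \<Rightarrow> real) (W :: nat \<Rightarrow> nat \<Rightarrow> real).
           AE z in D. \<forall>j\<in>{1..c}. j \<noteq> snd z \<longrightarrow>
              net_g n k us \<beta> v u \<gamma> W j (fst z) < net_g n k us \<beta> v u \<gamma> W (snd z) (fst z)"
proof -
  from assms(3) obtain a b where dpos: "\<delta> > 0"
    and ab: "\<forall>s\<in>{1..n}. norm (a s) = 1 \<and> strict_mono_on {1..k s + 1} (b s)"
    and lab: "\<forall>i\<in>multi_indices n k. \<exists>y\<in>{1..c}. AE z in D. fst z \<in> sep_cell X n a b \<delta> i \<longrightarrow> snd z = y"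
    and cov: "AE z in D. fst z \<in> (\<Union>i\<in>multi_indices n k. sep_cell X n a b \<delta> i)"
    unfolding separable_def by blast
  have lab': "\<forall>i\<in>multi_indices n k. \<exists>y. y \<in> {1..c} \<and> (AE z in D. fst z \<in> sep_cell X n a b \<delta> i \<longrightarrow> snd z = y)"
    using lab by blast
  from bchoice[OF lab'] obtain yf where
    yf: "\<forall>i\<in>multi_indices n k. yf i \<in> {1..c} \<and> (AE z in D. fst z \<in> sep_cell X n a b \<delta> i \<longrightarrow> snd z = yf i)"
    by blast
  have bm: "\<forall>s\<in>{1..n}. strict_mono_on {1..k s + 1} (b s)" using ab by blast
  obtain us \<beta> v u \<gamma> W where net: "\<forall>i\<in>multi_indices n k. \<forall>x\<in>sep_cell X n a b \<delta> i. \<forall>j. j \<noteq> yf i \<longrightarrow>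
        net_g n k us \<beta> v u \<gamma> W j x < net_g n k us \<beta> v u \<gamma> W (yf i) x"
    using construct[OF dpos bm, where X=X and yf=yf] by blast
  have fin: "finite (multi_indices n k)" unfolding multi_indices_def by (auto intro: finite_PiE)
  have "AE z in D. \<forall>i\<in>multi_indices n k. fst z \<in> sep_cell X n a b \<delta> i \<longrightarrow> snd z = yf i"
    by (subst AE_ball_countable[OF countable_finite[OF fin]]) (use yf in blast)
  with cov have "AE z in D. \<forall>j\<in>{1..c}. j \<noteq> snd z \<longrightarrow>
      net_g n k us \<beta> v u \<gamma> W j (fst z) < net_g n k us \<beta> v u \<gamma> W (snd z) (fst z)"
  proof eventually_elim
    case (elim z)
    then obtain i where i: "i \<in> multi_indices n k" "fst z \<in> sep_cell X n a b \<delta> i" "snd z = yf i" by blast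
    then show ?case using net by auto
  qed
  then show ?thesis by blast
qed

end
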